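(* Let $(L,[\cdot,\cdot,\cdot],\alpha)$ be a 3-Hom-Lie algebra, $(V,\rho,\beta)$ a representation of it, and $T:V\to L$ an $\mathcal{O}$-operator associated to $(V,\rho,\beta)$. Then $(V,\{\cdot,\cdot,\cdot\},\beta)$ with $\{u,v,w\}=\rho(Tu,Tv)w$ for $u,v,w\in V$ is a 3-Hom-pre-Lie algebra.
   Context: A 3-Hom-Lie algebra is a triple $(L,[\cdot,\cdot,\cdot],\alpha)$ with $[\cdot,\cdot,\cdot]:\wedge^3L\to L$ skew-symmetric trilinear and $\alpha$ linear satisfying $[\alpha(x),\alpha(y),[u,v,w]]=[[x,y,u],\alpha(v),\alpha(w)]+[\alpha(u),[x,y,v],\alpha(w)]+[\alpha(u),\alpha(v),[x,y,w]]$. A representation $(V,\rho,\beta)$ of it is a vector space $V$, $\beta\in gl(V)$ and a skew-symmetric bilinear $\rho:L\wedge L\to gl(V)$ with, for all $x,y,z,u\in L$: $\rho(\alpha(x),\alpha(y))\beta=\beta\rho(x,y)$; $\rho([x,y,z],\alpha(u))\beta=\rho(\alpha(y),\alpha(z))\rho(x,u)+\rho(\alpha(z),\alpha(x))\rho(y,u)+\rho(\alpha(x),\alpha(y))\rho(z,u)$; $\rho(\alpha(x),\alpha(y))\rho(z,u)=\rho(\alpha(z),\alpha(u))\rho(x,y)+\rho([x,y,z],\alpha(u))\beta+\rho(\alpha(z),[x,y,u])\beta$. An $\mathcal{O}$-operator associated to $(V,\rho,\beta)$ is a linear map $T:V\to L$ with $\alpha\circ T=T\circ\beta$ and $[Tu,Tv,Tw]=T(\rho(Tu,Tv)w+\rho(Tv,Tw)u+\rho(Tw,Tu)v)$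 for all $u,v,w\in V$. A 3-Hom-pre-Lie algebra is $(A,\{\cdot,\cdot,\cdot\},\gamma)$ with trilinear $\{\cdot,\cdot,\cdot\}$ and linear $\gamma$ such that, with $[x,y,z]_C=\{x,y,z\}+\{y,z,x\}+\{z,x,y\}$: $\{x,y,z\}=-\{y,x,z\}$; $\{\gamma(x),\gamma(y),\{z,u,v\}\}=\{[x,y,z]_C,\gamma(u),\gamma(v)\}+\{\gamma(z),[x,y,u]_C,\gamma(v)\}+\{\gamma(z),\gamma(u),\{x,y,v\}\}$; $\{[x,y,z]_C,\gamma(u),\gamma(v)\}=\{\gamma(x),\gamma(y),\{z,u,v\}\}+\{\gamma(y),\gamma(z),\{x,u,v\}\}+\{\gamma(z),\gamma(x),\{y,u,v\}\}$. *)

theory Defs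
  imports "HOL-Analysis.Analysis"
begin

definition trilinear_map ::
  "('k::field \<Rightarrow> 'a::ab_group_add \<Rightarrow> 'a) \<Rightarrow> ('k \<Rightarrow> 'b::ab_group_add \<Rightarrow> 'b)
   \<Rightarrow> ('a \<Rightarrow> 'a \<Rightarrow> 'a \<Rightarrow> 'b) \<Rightarrow> bool" where
  "trilinear_map sA sB f \<longleftrightarrow>
     (\<forall>y z. Vector_Spaces.linear sA sB (\<lambda>x. f x y z)) \<and>
     (\<forall>x z. Vector_Spaces.linear sA sB (\<lambda>y. f x y z)) \<and>
     (\<forall>x y. Vector_Spaces.linear sA sB (\<lambda>z. f x y z))"

text \<open>A 3-Hom-Lie algebra: bracket is an alternating (i.e. defined on \<wedge>^3 L) trilinear map.\<close>
definition hom_lie3 ::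
  "('k::field \<Rightarrow> 'l::ab_group_add \<Rightarrow> 'l) \<Rightarrow> ('l \<Rightarrow> 'l \<Rightarrow> 'l \<Rightarrow> 'l) \<Rightarrow> ('l \<Rightarrow> 'l) \<Rightarrow> bool" where
  "hom_lie3 sL br \<alpha> \<longleftrightarrow>
     vector_space sL \<and>
     trilinear_map sL sL br \<and>
     (\<forall>x y z. br x x z = 0 \<and> br x y y = 0 \<and> br x y x = 0) \<and>
     Vector_Spaces.linear sL sL \<alpha> \<and>
     (\<forall>x y u v w. br (\<alpha> x) (\<alpha> y) (br u v w) =
         br (br x y u) (\<alpha> v) (\<alpha> w) + br (\<alpha> u) (br x y v) (\<alpha> w) + br (\<alpha> u) (\<alpha> v) (br x y w))"

text \<open>Representation (V, rho, beta): rho is an alternating bilinear map L x L to gl(V); bilinearity of the gl(V)-valued map is stated pointwise (equivalent, since gl(V) operations are pointwise).\<close>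
definition hom_lie3_rep ::
  "('k::field \<Rightarrow> 'l::ab_group_add \<Rightarrow> 'l) \<Rightarrow> ('l \<Rightarrow> 'l \<Rightarrow> 'l \<Rightarrow> 'l) \<Rightarrow> ('l \<Rightarrow> 'l)
   \<Rightarrow> ('k \<Rightarrow> 'v::ab_group_add \<Rightarrow> 'v) \<Rightarrow> ('l \<Rightarrow> 'l \<Rightarrow> 'v \<Rightarrow> 'v) \<Rightarrow> ('v \<Rightarrow> 'v) \<Rightarrow> bool" where
  "hom_lie3_rep sL br \<alpha> sV \<rho> \<beta> \<longleftrightarrow>
     vector_space sV \<and>
     Vector_Spaces.linear sV sV \<beta> \<and>
     (\<forall>x y. Vector_Spaces.linear sV sV (\<rho> x y)) \<and>
     (\<forall>y v. Vector_Spaces.linear sL sV (\<lambda>x. \<rho> x y v)) \<and>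
     (\<forall>x v. Vector_Spaces.linear sL sV (\<lambda>y. \<rho> x y v)) \<and>
     (\<forall>x v. \<rho> x x v = 0) \<and>
     (\<forall>x y v. \<rho> (\<alpha> x) (\<alpha> y) (\<beta> v) = \<beta> (\<rho> x y v)) \<and>
     (\<forall>x y z u v. \<rho> (br x y z) (\<alpha> u) (\<beta> v) =
        \<rho> (\<alpha> y) (\<alpha> z) (\<rho> x u v) + \<rho> (\<alpha> z) (\<alpha> x) (\<rho> y u v)
        + \<rho> (\<alpha> x) (\<alpha> y) (\<rho> z u v)) \<and>
     (\<forall>x y z u v. \<rho> (\<alpha> x) (\<alpha> y) (\<rho> z u v) =
        \<rho> (\<alpha> z) (\<alpha> u) (\<rho> x y v) + \<rho> (br x y z) (\<alpha> u) (\<beta> v)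
        + \<rho> (\<alpha> z) (br x y u) (\<beta> v))"

definition O_operator ::
  "('k::field \<Rightarrow> 'l::ab_group_add \<Rightarrow> 'l) \<Rightarrow> ('l \<Rightarrow> 'l \<Rightarrow> 'l \<Rightarrow> 'l) \<Rightarrow> ('l \<Rightarrow> 'l)
   \<Rightarrow> ('k \<Rightarrow> 'v::ab_group_add \<Rightarrow> 'v) \<Rightarrow> ('l \<Rightarrow> 'l \<Rightarrow> 'v \<Rightarrow> 'v) \<Rightarrow> ('v \<Rightarrow> 'v) \<Rightarrow> ('v \<Rightarrow> 'l) \<Rightarrow> bool" where
  "O_operator sL br \<alpha> sV \<rho> \<beta> T \<longleftrightarrow>
     Vector_Spaces.linear sV sL T \<and>
     \<alpha> \<circ> T = T \<circ> \<beta> \<and>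
     (\<forall>u v w. br (T u) (T v) (T w) =
        T (\<rho> (T u) (T v) w + \<rho> (T v) (T w) u + \<rho> (T w) (T u) v))"

definition cbr3 :: "('a \<Rightarrow> 'a \<Rightarrow> 'a \<Rightarrow> 'a::plus) \<Rightarrow> 'a \<Rightarrow> 'a \<Rightarrow> 'a \<Rightarrow> 'a" where
  "cbr3 m x y z = m x y z + m y z x + m z x y"

definition hom_pre_lie3 ::
  "('k::field \<Rightarrow> 'a::ab_group_add \<Rightarrow> 'a) \<Rightarrow> ('a \<Rightarrow> 'a \<Rightarrow> 'a \<Rightarrow> 'a) \<Rightarrow> ('a \<Rightarrow> 'a) \<Rightarrow> bool" where
  "hom_pre_lie3 sA m \<gamma> \<longleftrightarrow>
     vector_space sA \<and>
     trilinear_map sA sA m \<and>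
     Vector_Spaces.linear sA sA \<gamma> \<and>
     (\<forall>x y z. m x y z = - m y x z) \<and>
     (\<forall>x y z u v. m (\<gamma> x) (\<gamma> y) (m z u v) =
        m (cbr3 m x y z) (\<gamma> u) (\<gamma> v) + m (\<gamma> z) (cbr3 m x y u) (\<gamma> v) + m (\<gamma> z) (\<gamma> u) (m x y v)) \<and>
     (\<forall>x y z u v. m (cbr3 m x y z) (\<gamma> u) (\<gamma> v) =
        m (\<gamma> x) (\<gamma> y) (m z u v) + m (\<gamma> y) (\<gamma> z) (m x u v) + m (\<gamma> z) (\<gamma> x) (m y u v))"

end

theory Submission
  imports Defs
begin

theorem proposition3p6:
  fixes sL :: "'k::field \<Rightarrow> 'l::ab_group_add \<Rightarrow> 'l"
    and sV :: "'k \<Rightarrow> 'v::ab_group_add \<Rightarrow> 'v"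
    and br :: "'l \<Rightarrow> 'l \<Rightarrow> 'l \<Rightarrow> 'l" and \<alpha> :: "'l \<Rightarrow> 'l"
    and \<rho> :: "'l \<Rightarrow> 'l \<Rightarrow> 'v \<Rightarrow> 'v" and \<beta> :: "'v \<Rightarrow> 'v" and T :: "'v \<Rightarrow> 'l"
  assumes "hom_lie3 sL br \<alpha>"
    and "hom_lie3_rep sL br \<alpha> sV \<rho> \<beta>"
    and "O_operator sL br \<alpha> sV \<rho> \<beta> T"
  shows "hom_pre_lie3 sV (\<lambda>u v w. \<rho> (T u) (T v) w) \<beta>"
proof -
  note R = assms(2)[unfolded hom_lie3_rep_def]
  note O = assms(3)[unfolded O_operator_def]
  have vs: "vector_space sV" using R by (elim conjE)
  have linT: "Vector_Spaces.linear sV sL T" using O by (elim conjE)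
  have ab: "\<alpha> \<circ> T = T \<circ> \<beta>" using O by (elim conjE)
  have Tb: "\<And>x. T (\<beta> x) = \<alpha> (T x)" using fun_cong[OF ab] by simp
  have O3: "\<forall>u v w. br (T u) (T v) (T w) =
        T (\<rho> (T u) (T v) w + \<rho> (T v) (T w) u + \<rho> (T w) (T u) v)" using O by (elim conjE)
  have l1: "\<forall>y v. Vector_Spaces.linear sL sV (\<lambda>x. \<rho> x y v)" using R by (elim conjE)
  have l2: "\<forall>x v. Vector_Spaces.linear sL sV (\<lambda>y. \<rho> x y v)" using R by (elim conjE)
  have l3: "\<forall>x y. Vector_Spaces.linear sV sV (\<rho> x y)" using R by (elim conjE)
  have alt: "\<forall>x v. \<rho> x x v = 0" using R by (elim conjE)
  note l1 = l1[rule_format] and l2 = l2[rule_format] and l3 = l3[rule_format] and alt = alt[rule_format]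
  have add1: "\<And>a b c v. \<rho> (a + b) c v = \<rho> a c v + \<rho> b c v"
  proof -
    fix a b c v show "\<rho> (a + b) c v = \<rho> a c v + \<rho> b c v"
      using l1[of c v] unfolding Vector_Spaces.linear_iff by simp
  qed
  have add2: "\<And>a b c v. \<rho> c (a + b) v = \<rho> c a v + \<rho> c b v"
  proof -
    fix a b c v show "\<rho> c (a + b) v = \<rho> c a v + \<rho> c b v"
      using l2[of c v] unfolding Vector_Spaces.linear_iff by simp
  qed
  have skew: "\<And>a b v. \<rho> a b v = - \<rho> b a v"
  proof -
    fix a b v
    have "0 = \<rho> (a + b) (a + b) v" using alt by simp
    also have "\<dots> = \<rho> a a v + \<rho> b a v + (\<rho> a b v + \<rho> b b v)" unfolding add1 add2 by (rule refl)
    also have "\<dots> = \<rho> a b v + \<rho> b a v" unfolding alt by (simp add: add.commute)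
    finally have "\<rho> a b v + \<rho> b a v = 0" by (rule sym)
    then show "\<rho> a b v = - \<rho> b a v" by (simp only: eq_neg_iff_add_eq_0)
  qed
  have E2: "\<forall>x y z u v. \<rho> (br x y z) (\<alpha> u) (\<beta> v) =
        \<rho> (\<alpha> y) (\<alpha> z) (\<rho> x u v) + \<rho> (\<alpha> z) (\<alpha> x) (\<rho> y u v)
        + \<rho> (\<alpha> x) (\<alpha> y) (\<rho> z u v)" using R by (elim conjE)
  have E3: "\<forall>x y z u v. \<rho> (\<alpha> x) (\<alpha> y) (\<rho> z u v) =
        \<rho> (\<alpha> z) (\<alpha> u) (\<rho> x y v) + \<rho> (br x y z) (\<alpha> u) (\<beta> v)
        + \<rho> (\<alpha> z) (br x y u) (\<beta> v)" using R by (elim conjE)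
  have TC: "\<And>x y z. T (cbr3 (\<lambda>u v w. \<rho> (T u) (T v) w) x y z) = br (T x) (T y) (T z)"
    unfolding cbr3_def using O3 by simp
  have tri: "trilinear_map sV sV (\<lambda>u v w. \<rho> (T u) (T v) w)"
    unfolding trilinear_map_def
  proof (intro conjI allI)
    fix y z
    show "Vector_Spaces.linear sV sV (\<lambda>x. \<rho> (T x) (T y) z)"
      using Vector_Spaces.linear_compose[OF linT l1[of "T y" z]] by (simp add: comp_def)
  next
    fix x z
    show "Vector_Spaces.linear sV sV (\<lambda>y. \<rho> (T x) (T y) z)"
      using Vector_Spaces.linear_compose[OF linT l2[of "T x" z]] by (simp add: comp_def)
  next
    fix x y
    show "Vector_Spaces.linear sV sV (\<lambda>z. \<rho> (T x) (T y) z)" using l3 by simp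
  qed
  show ?thesis
    unfolding hom_pre_lie3_def
  proof (intro conjI allI)
    show "vector_space sV" by fact
    show "trilinear_map sV sV (\<lambda>u v w. \<rho> (T u) (T v) w)" by fact
    show "Vector_Spaces.linear sV sV \<beta>" using R by (elim conjE)
  next
    fix x y z show "\<rho> (T x) (T y) z = - \<rho> (T y) (T x) z" by (rule skew)
  next
    fix x y z u v
    show "\<rho> (T (\<beta> x)) (T (\<beta> y)) (\<rho> (T z) (T u) v) =
        \<rho> (T (cbr3 (\<lambda>u v w. \<rho> (T u) (T v) w) x y z)) (T (\<beta> u)) (\<beta> v) +
        \<rho> (T (\<beta> z)) (T (cbr3 (\<lambda>u v w. \<rho> (T u) (T v) w) x y u)) (\<beta> v) +
        \<rho> (T (\<beta> z)) (T (\<beta> u)) (\<rho> (T x) (T y) v)"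
      unfolding Tb TC E3[rule_format, of "T x" "T y" "T z" "T u" v] by (simp only: ac_simps)
  next
    fix x y z u v
    show "\<rho> (T (cbr3 (\<lambda>u v w. \<rho> (T u) (T v) w) x y z)) (T (\<beta> u)) (\<beta> v) =
        \<rho> (T (\<beta> x)) (T (\<beta> y)) (\<rho> (T z) (T u) v) +
        \<rho> (T (\<beta> y)) (T (\<beta> z)) (\<rho> (T x) (T u) v) +
        \<rho> (T (\<beta> z)) (T (\<beta> x)) (\<rho> (T y) (T u) v)"
      unfolding Tb TC E2[rule_format, of "T x" "T y" "T z" "T u" v] by (simp only: ac_simps)
  qed
qed

end
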